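(* Let $G$ be a group acting geometrically (i.e.\ properly and cocompactly by isometries) on a CAT(0) space $X$. For $g\in G$, the fixed-point set $\mathcal{F}_g=\{\alpha\in\partial X\mid g\alpha=\alpha\}$ is nonempty if and only if the centralizer $Z_g=\{v\in G\mid gv=vg\}$ is infinite.
   Context: $\partial X$ denotes the visual boundary of the (necessarily proper) CAT(0) space $X$: asymptotic classes of geodesic rays with the cone topology, so that $X\cup\partial X$ is a compactification of $X$. An isometry $g$ acts on $\partial X$ by $g(\xi(\infty))=(g\circ\xi)(\infty)$. *)

theory Defs
  imports "HOL-Analysis.Analysis" "HOL-Algebra.Group_Action"
begin

definition geodesic_segment :: "(real \<Rightarrow> 'a::metric_space) \<Rightarrow> 'a \<Rightarrow> 'a \<Rightarrow> bool" where
  "geodesic_segment c x y \<longleftrightarrow> c 0 = x \<and> c (dist x y) = y \<and>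
     (\<forall>s\<in>{0..dist x y}. \<forall>t\<in>{0..dist x y}. dist (c s) (c t) = \<bar>s - t\<bar>)"

definition geodesic_space :: "'a::metric_space itself \<Rightarrow> bool" where
  "geodesic_space _ \<longleftrightarrow> (\<forall>x y::'a. \<exists>c. geodesic_segment c x y)"

definition proper_space :: "'a::metric_space itself \<Rightarrow> bool" where
  "proper_space _ \<longleftrightarrow> (\<forall>(x::'a) r. compact (cball x r))"

text \<open>Point of the Euclidean comparison segment [a',b'] (of length L) at distance t from a'.\<close>
definition cmp_pt :: "complex \<Rightarrow> complex \<Rightarrow> real \<Rightarrow> real \<Rightarrow> complex" where
  "cmp_pt a' b' L t = a' + complex_of_real (t / L) * (b' - a')"

definition CAT0_space :: "'a::metric_space itself \<Rightarrow> bool" where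
  "CAT0_space T \<longleftrightarrow> geodesic_space T \<and>
    (\<forall>(x::'a) y z c1 c2 c3 x' y' z'.
       geodesic_segment c1 x y \<and> geodesic_segment c2 y z \<and> geodesic_segment c3 z x \<and>
       dist x' y' = dist x y \<and> dist y' z' = dist y z \<and> dist z' x' = dist z x \<longrightarrow>
       (let S = {(c1, x', y', dist x y), (c2, y', z', dist y z), (c3, z', x', dist z x)} in
        \<forall>(c, a, b, L)\<in>S. \<forall>(c', a2, b2, L2)\<in>S. \<forall>s\<in>{0..L}. \<forall>t\<in>{0..L2}.
          dist (c s) (c' t) \<le> dist (cmp_pt a b L s) (cmp_pt a2 b2 L2 t)))"

definition geodesic_ray :: "(real \<Rightarrow> 'a::metric_space) \<Rightarrow> bool" where
  "geodesic_ray \<xi> \<longleftrightarrow> (\<forall>s\<ge>0. \<forall>t\<ge>0. dist (\<xi> s) (\<xi> t) = \<bar>s - t\<bar>)"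

definition asymptotic :: "(real \<Rightarrow> 'a::metric_space) \<Rightarrow> (real \<Rightarrow> 'a) \<Rightarrow> bool" where
  "asymptotic \<xi> \<eta> \<longleftrightarrow> (\<exists>C. \<forall>t\<ge>0. dist (\<xi> t) (\<eta> t) \<le> C)"

definition visual_boundary :: "'a::metric_space itself \<Rightarrow> (real \<Rightarrow> 'a) set set" where
  "visual_boundary _ = {{\<eta>. geodesic_ray \<eta> \<and> asymptotic \<xi> \<eta>} | \<xi>. geodesic_ray \<xi>}"

definition bd_act :: "('a \<Rightarrow> 'a) \<Rightarrow> (real \<Rightarrow> 'a) set \<Rightarrow> (real \<Rightarrow> 'a) set" where
  "bd_act f \<alpha> = (\<lambda>\<xi>. f \<circ> \<xi>) ` \<alpha>"

definition boundary_fixed_set :: "('a::metric_space \<Rightarrow> 'a) \<Rightarrow> (real \<Rightarrow> 'a) set set" where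
  "boundary_fixed_set f = {\<alpha> \<in> visual_boundary TYPE('a). bd_act f \<alpha> = \<alpha>}"

definition isometric_action :: "('g, 'b) monoid_scheme \<Rightarrow> ('g \<Rightarrow> 'a::metric_space \<Rightarrow> 'a) \<Rightarrow> bool" where
  "isometric_action G \<phi> \<longleftrightarrow> group_action G UNIV \<phi> \<and>
     (\<forall>g\<in>carrier G. \<forall>x y. dist (\<phi> g x) (\<phi> g y) = dist x y)"

text \<open>Proper action (Bridson--Haefliger I.8.2).\<close>
definition proper_action :: "('g, 'b) monoid_scheme \<Rightarrow> ('g \<Rightarrow> 'a::metric_space \<Rightarrow> 'a) \<Rightarrow> bool" where
  "proper_action G \<phi> \<longleftrightarrow> (\<forall>x. \<exists>r>0.
     finite {g \<in> carrier G. \<phi> g ` ball x r \<inter> ball x r \<noteq> {}})"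

definition cocompact_action :: "('g, 'b) monoid_scheme \<Rightarrow> ('g \<Rightarrow> 'a::metric_space \<Rightarrow> 'a) \<Rightarrow> bool" where
  "cocompact_action G \<phi> \<longleftrightarrow> (\<exists>K. compact K \<and> (\<Union>g\<in>carrier G. \<phi> g ` K) = UNIV)"

definition geometric_action :: "('g, 'b) monoid_scheme \<Rightarrow> ('g \<Rightarrow> 'a::metric_space \<Rightarrow> 'a) \<Rightarrow> bool" where
  "geometric_action G \<phi> \<longleftrightarrow> isometric_action G \<phi> \<and> proper_action G \<phi> \<and> cocompact_action G \<phi>"

definition centralizer_of :: "('g, 'b) monoid_scheme \<Rightarrow> 'g \<Rightarrow> 'g set" where
  "centralizer_of G g = {v \<in> carrier G. g \<otimes>\<^bsub>G\<^esub> v = v \<otimes>\<^bsub>G\<^esub> g}"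

end

theory Submission
  imports Defs "HOL-Library.Diagonal_Subsequence"
begin

lemma act_comp:
  assumes "group_action G UNIV \<phi>" "g1 \<in> carrier G" "g2 \<in> carrier G"
  shows "\<phi> (g1 \<otimes>\<^bsub>G\<^esub> g2) x = \<phi> g1 (\<phi> g2 x)"
  using group_action.composition_rule[OF assms(1) _ assms(2,3)] by simp

lemma act_one:
  assumes "group_action G UNIV \<phi>"
  shows "\<phi> \<one>\<^bsub>G\<^esub> x = x"
proof -
  have "(\<lambda>x\<in>UNIV. x) x = \<phi> \<one>\<^bsub>G\<^esub> x" using group_action.id_eq_one[OF assms] by simp
  then show ?thesis by simp
qed

lemma act_inv:
  assumes "group G" "group_action G UNIV \<phi>" "g \<in> carrier G"
  shows "\<phi> (inv\<^bsub>G\<^esub> g) (\<phi> g x) = x" "\<phi> g (\<phi> (inv\<^bsub>G\<^esub> g) x) = x"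
  using act_comp[OF assms(2), of "inv\<^bsub>G\<^esub> g" g x] act_comp[OF assms(2), of g "inv\<^bsub>G\<^esub> g" x]
    act_one[OF assms(2)] assms(3) group.inv_closed[OF assms(1)] group.l_inv[OF assms(1)] group.r_inv[OF assms(1)]
  by simp_all

lemma finite_displace:
  fixes G (structure) and \<phi> :: "'g \<Rightarrow> 'a::metric_space \<Rightarrow> 'a"
  assumes grp: "group G" and ga: "group_action G UNIV \<phi>"
    and pa: "proper_action G \<phi>" and ps: "proper_space TYPE('a)"
  shows "finite {h \<in> carrier G. dist (\<phi> h x0) x0 \<le> R}"
proof -
  interpret group G by fact
  have "\<forall>z. \<exists>r. r > 0 \<and> finite {g \<in> carrier G. \<phi> g ` ball z r \<inter> ball z r \<noteq> {}}"
    using pa unfolding proper_action_def by blast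
  from choice[OF this] obtain rr where rr: "\<And>z. rr z > 0 \<and> finite {g \<in> carrier G. \<phi> g ` ball z (rr z) \<inter> ball z (rr z) \<noteq> {}}"
    by blast
  have cpt: "compact (cball x0 R)" using ps unfolding proper_space_def by blast
  have cov: "cball x0 R \<subseteq> \<Union>((\<lambda>z. ball z (rr z)) ` cball x0 R)"
  proof
    fix z assume "z \<in> cball x0 R"
    moreover have "z \<in> ball z (rr z)" using rr[of z] by simp
    ultimately show "z \<in> \<Union>((\<lambda>z. ball z (rr z)) ` cball x0 R)" by blast
  qed
  obtain T where T: "T \<subseteq> cball x0 R" "finite T" "cball x0 R \<subseteq> \<Union>((\<lambda>z. ball z (rr z)) ` T)"
    using compactE_image[OF cpt _ cov] by blast
  define A where "A z = {h \<in> carrier G. \<phi> h x0 \<in> ball z (rr z)}" for z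
  have finA: "finite (A z)" for z
  proof (cases "A z = {}")
    case True then show ?thesis by simp
  next
    case False
    then obtain h1 where h1: "h1 \<in> A z" by blast
    define F where "F = {g \<in> carrier G. \<phi> g ` ball z (rr z) \<inter> ball z (rr z) \<noteq> {}}"
    have "A z \<subseteq> (\<lambda>f. f \<otimes> h1) ` F"
    proof
      fix h assume h: "h \<in> A z"
      have hc: "h \<in> carrier G" and h1c: "h1 \<in> carrier G" using h h1 unfolding A_def by auto
      have "\<phi> (h \<otimes> inv h1) (\<phi> h1 x0) = \<phi> h x0"
        using act_comp[OF ga, of h "inv h1"] act_inv[OF grp ga h1c] hc h1c by simp
      hence "h \<otimes> inv h1 \<in> F" using h h1 hc h1c unfolding F_def A_def by force
      moreover have "h = (h \<otimes> inv h1) \<otimes> h1" using hc h1c by (simp add: m_assoc)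
      ultimately show "h \<in> (\<lambda>f. f \<otimes> h1) ` F" by blast
    qed
    moreover have "finite F" using rr unfolding F_def by blast
    ultimately show ?thesis using finite_subset by blast
  qed
  have "{h \<in> carrier G. dist (\<phi> h x0) x0 \<le> R} \<subseteq> \<Union>(A ` T)"
  proof
    fix h assume h: "h \<in> {h \<in> carrier G. dist (\<phi> h x0) x0 \<le> R}"
    then have "\<phi> h x0 \<in> cball x0 R" by (simp add: dist_commute)
    then obtain z where "z \<in> T" "\<phi> h x0 \<in> ball z (rr z)" using T by blast
    then show "h \<in> \<Union>(A ` T)" using h unfolding A_def by blast
  qed
  then show ?thesis using finA T(2) by (meson finite_UN_I finite_subset)
qed


lemma (in group) cancel_left_inv:
  "x \<in> carrier G \<Longrightarrow> y \<in> carrier G \<Longrightarrow> x \<otimes> (inv x \<otimes> y) = y"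
  by (simp add: m_assoc[symmetric])

lemma dir1:
  fixes G (structure) and \<phi> :: "'g \<Rightarrow> 'a::metric_space \<Rightarrow> 'a"
  assumes grp: "group G" and ps: "proper_space TYPE('a)"
    and geo: "geometric_action G \<phi>" and gc: "g \<in> carrier G"
    and fx: "boundary_fixed_set (\<phi> g) \<noteq> {}"
  shows "infinite (centralizer_of G g)"
proof -
  interpret group G by fact
  have ga: "group_action G UNIV \<phi>" and iso: "\<And>f x y. f \<in> carrier G \<Longrightarrow> dist (\<phi> f x) (\<phi> f y) = dist x y"
    and pa: "proper_action G \<phi>" and cc: "cocompact_action G \<phi>"
    using geo unfolding geometric_action_def isometric_action_def by auto
  obtain \<alpha> where \<alpha>: "\<alpha> \<in> visual_boundary TYPE('a)" "bd_act (\<phi> g) \<alpha> = \<alpha>"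
    using fx unfolding boundary_fixed_set_def by blast
  obtain \<xi> where \<xi>: "geodesic_ray \<xi>" "\<alpha> = {\<eta>. geodesic_ray \<eta> \<and> asymptotic \<xi> \<eta>}"
    using \<alpha>(1) unfolding visual_boundary_def by blast
  have "\<xi> \<in> \<alpha>" using \<xi> unfolding asymptotic_def by auto
  hence "\<phi> g \<circ> \<xi> \<in> bd_act (\<phi> g) \<alpha>" unfolding bd_act_def by blast
  hence "asymptotic \<xi> (\<phi> g \<circ> \<xi>)" using \<alpha>(2) \<xi>(2) by auto
  then obtain C where C: "\<And>t. t \<ge> 0 \<Longrightarrow> dist (\<xi> t) (\<phi> g (\<xi> t)) \<le> C"
    unfolding asymptotic_def by auto
  obtain K where K: "compact K" "(\<Union>f\<in>carrier G. \<phi> f ` K) = UNIV"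
    using cc unfolding cocompact_action_def by blast
  define x0 where "x0 = \<xi> 0"
  obtain D where D: "\<And>y. y \<in> K \<Longrightarrow> dist x0 y \<le> D"
    using compact_imp_bounded[OF K(1)] bounded_any_center[of K x0] by blast
  have "\<forall>n::nat. \<exists>p. fst p \<in> carrier G \<and> snd p \<in> K \<and> \<phi> (fst p) (snd p) = \<xi> (real n)"
  proof
    fix n :: nat
    have "\<xi> (real n) \<in> UNIV" by simp
    hence "\<xi> (real n) \<in> (\<Union>f\<in>carrier G. \<phi> f ` K)" by (simp only: K(2))
    then obtain f where f: "f \<in> carrier G" "\<xi> (real n) \<in> \<phi> f ` K" by (rule UN_E)
    from f(2) obtain y where "y \<in> K" "\<xi> (real n) = \<phi> f y" by (rule imageE)
    with f(1) have "f \<in> carrier G" "y \<in> K" "\<phi> f y = \<xi> (real n)" by auto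
    then show "\<exists>p. fst p \<in> carrier G \<and> snd p \<in> K \<and> \<phi> (fst p) (snd p) = \<xi> (real n)"
      by (intro exI[of _ "(f, y)"]) simp
  qed
  from choice[OF this] obtain p where p: "\<And>n. fst (p n) \<in> carrier G \<and> snd (p n) \<in> K \<and> \<phi> (fst (p n)) (snd (p n)) = \<xi> (real n)"
    by blast
  define h where "h n = fst (p n)" for n
  define y where "y n = snd (p n)" for n
  have hy: "\<And>n. h n \<in> carrier G" "\<And>n. y n \<in> K" "\<And>n. \<phi> (h n) (y n) = \<xi> (real n)"
    using p unfolding h_def y_def by auto
  define S where "S = {f \<in> carrier G. dist (\<phi> f x0) x0 \<le> 2 * D + C}"
  have finS: "finite S" unfolding S_def using finite_displace[OF grp ga pa ps] by blast
  define F where "F k = inv k \<otimes> g \<otimes> k" for k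
  have FS: "F (h n) \<in> S" for n
  proof -
    have c1: "F (h n) \<in> carrier G" unfolding F_def using hy gc by simp
    have "\<phi> (F (h n)) (y n) = \<phi> (inv (h n)) (\<phi> g (\<xi> (real n)))"
      unfolding F_def using hy gc act_comp[OF ga] by simp
    hence "dist (\<phi> (F (h n)) (y n)) (y n) = dist (\<phi> g (\<xi> (real n))) (\<xi> (real n))"
      using iso[of "inv (h n)" "\<phi> g (\<xi> (real n))" "\<xi> (real n)"] act_inv(1)[OF grp ga hy(1)[of n], of "y n"] hy(1)[of n] hy(3)[of n]
      by simp
    also have "\<dots> \<le> C" using C[of "real n"] by (simp add: dist_commute)
    finally have a: "dist (\<phi> (F (h n)) (y n)) (y n) \<le> C" .
    have "dist (\<phi> (F (h n)) x0) x0 \<le> dist (\<phi> (F (h n)) x0) (\<phi> (F (h n)) (y n)) + dist (\<phi> (F (h n)) (y n)) (y n) + dist (y n) x0"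
      using dist_triangle[of "\<phi> (F (h n)) x0" x0 "\<phi> (F (h n)) (y n)"] dist_triangle[of "\<phi> (F (h n)) (y n)" x0 "y n"]
      by linarith
    also have "\<dots> \<le> D + C + D" using iso[OF c1, of x0 "y n"] a D[OF hy(2)[of n]]
      by (simp add: dist_commute)
    finally show ?thesis unfolding S_def using c1 by simp
  qed
  have infH: "infinite (range h)"
  proof
    assume fin: "finite (range h)"
    have "bounded ((\<lambda>k. \<phi> k x0) ` range h)" using fin by auto
    then obtain B where B: "\<And>k. k \<in> range h \<Longrightarrow> dist x0 (\<phi> k x0) \<le> B"
      using bounded_any_center[of _ x0] by (meson rangeI image_eqI)
    obtain n :: nat where n: "real n > D + B" using reals_Archimedean2 by blast
    have "real n = dist (\<xi> (real n)) (\<xi> 0)" using \<xi>(1) unfolding geodesic_ray_def by simp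
    also have "\<dots> = dist (\<phi> (h n) (y n)) x0" using hy x0_def by simp
    also have "\<dots> \<le> dist (\<phi> (h n) (y n)) (\<phi> (h n) x0) + dist (\<phi> (h n) x0) x0"
      by (rule dist_triangle)
    also have "\<dots> \<le> D + B" using iso[OF hy(1)[of n], of "y n" x0] D[OF hy(2)[of n]] B[of "h n"]
      by (simp add: dist_commute)
    finally show False using n by simp
  qed
  have "finite (F ` range h)" using FS finS by (metis finite_subset image_subsetI rangeE)
  then obtain h0 where h0: "h0 \<in> range h" "infinite {k \<in> range h. F k = F h0}"
    using pigeonhole_infinite[OF infH] by blast
  define A where "A = {k \<in> range h. F k = F h0}"
  have h0c: "h0 \<in> carrier G" using h0 hy by auto
  have inj: "inj_on (\<lambda>k. h0 \<otimes> inv k) A"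
  proof (rule inj_onI)
    fix a b assume "a \<in> A" "b \<in> A" "h0 \<otimes> inv a = h0 \<otimes> inv b"
    moreover have "a \<in> carrier G" "b \<in> carrier G" using \<open>a \<in> A\<close> \<open>b \<in> A\<close> hy unfolding A_def by auto
    ultimately have "inv a = inv b" using h0c by simp
    thus "a = b" using \<open>a \<in> carrier G\<close> \<open>b \<in> carrier G\<close> by (metis inv_inv)
  qed
  have sub: "(\<lambda>k. h0 \<otimes> inv k) ` A \<subseteq> centralizer_of G g"
  proof
    fix v assume "v \<in> (\<lambda>k. h0 \<otimes> inv k) ` A"
    then obtain k where k: "k \<in> A" "v = h0 \<otimes> inv k" by blast
    have kc: "k \<in> carrier G" using k hy unfolding A_def by auto
    have eq: "inv k \<otimes> g \<otimes> k = inv h0 \<otimes> g \<otimes> h0" using k unfolding A_def F_def by auto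
    have "g \<otimes> v = h0 \<otimes> (inv h0 \<otimes> g \<otimes> h0) \<otimes> inv k"
      using k(2) kc h0c gc by (simp add: m_assoc cancel_left_inv)
    also have "\<dots> = h0 \<otimes> (inv k \<otimes> g \<otimes> k) \<otimes> inv k" using eq by simp
    also have "\<dots> = v \<otimes> g" using k(2) kc h0c gc by (simp add: m_assoc cancel_left_inv)
    finally show "v \<in> centralizer_of G g" unfolding centralizer_of_def using k(2) kc h0c by simp
  qed
  show ?thesis
  proof
    assume "finite (centralizer_of G g)"
    hence "finite ((\<lambda>k. h0 \<otimes> inv k) ` A)" using sub finite_subset by blast
    hence "finite A" using inj finite_imageD by blast
    thus False using h0(2) unfolding A_def by simp
  qed
qed


lemma geo_rev:
  assumes "geodesic_segment c x y"
  shows "geodesic_segment (\<lambda>t. c (dist x y - t)) y x"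
  using assms unfolding geodesic_segment_def
  by (auto simp: dist_commute abs_minus_commute)

lemma geo_isom:
  assumes "geodesic_segment c x y" "\<And>u v. dist (f u) (f v) = dist u v"
  shows "geodesic_segment (f \<circ> c) (f x) (f y)"
  using assms unfolding geodesic_segment_def by auto

lemma cmp_tri:
  fixes a b c :: real
  assumes "0 \<le> a" "0 \<le> b" "0 \<le> c" "a \<le> b + c" "b \<le> a + c" "c \<le> a + b"
  shows "\<exists>x' y' z' :: complex. dist x' y' = a \<and> dist y' z' = b \<and> dist z' x' = c"
proof (cases "a = 0")
  case True
  then have "b = c" using assms by linarith
  then show ?thesis using True assms
    by (intro exI[of _ 0] exI[of _ "complex_of_real c"]) (simp add: dist_norm)
next
  case False
  then have apos: "a > 0" using assms by simp
  define p where "p = (a\<^sup>2 + c\<^sup>2 - b\<^sup>2) / (2 * a)"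
  have b1: "b\<^sup>2 \<le> (a + c)\<^sup>2" using assms by (intro power_mono) auto
  have b2: "(a - c)\<^sup>2 \<le> b\<^sup>2"
  proof -
    have "\<bar>a - c\<bar> \<le> b" using assms by linarith
    hence "\<bar>a - c\<bar>\<^sup>2 \<le> b\<^sup>2" by (intro power_mono) auto
    thus ?thesis by simp
  qed
  have "\<bar>a\<^sup>2 + c\<^sup>2 - b\<^sup>2\<bar> \<le> 2 * a * c" using b1 b2 by (simp add: power2_eq_square algebra_simps abs_le_iff)
  hence "\<bar>p\<bar> \<le> c" unfolding p_def using apos by (simp add: abs_div divide_le_eq mult.commute mult.left_commute)
  hence pc: "p\<^sup>2 \<le> c\<^sup>2" using assms by (metis abs_le_square_iff abs_of_nonneg)
  define q where "q = sqrt (c\<^sup>2 - p\<^sup>2)"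
  have q2: "q\<^sup>2 = c\<^sup>2 - p\<^sup>2" unfolding q_def using pc by simp
  have e1: "(p - a)\<^sup>2 + q\<^sup>2 = b\<^sup>2"
    unfolding q2 p_def using apos by (simp add: power2_eq_square field_simps)
  have e2: "p\<^sup>2 + q\<^sup>2 = c\<^sup>2" using q2 by simp
  have "dist (0::complex) (complex_of_real a) = a" using assms by (simp add: dist_norm)
  moreover have "dist (complex_of_real a) (Complex p q) = b"
  proof -
    have "dist (complex_of_real a) (Complex p q) = sqrt ((p - a)\<^sup>2 + q\<^sup>2)"
    proof -
      have "complex_of_real a - Complex p q = Complex (a - p) (- q)" by (simp add: complex_eq_iff)
      thus ?thesis by (simp add: dist_norm complex_norm power2_commute)
    qed
    thus ?thesis using e1 assms by simp
  qed
  moreover have "dist (Complex p q) 0 = c"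
    using e2 assms by (simp add: dist_norm complex_norm)
  ultimately show ?thesis by blast
qed

lemma cmp_pt_frac:
  assumes "dist a b = L" "0 \<le> l"
  shows "cmp_pt a b L (l * L) = a + complex_of_real l * (b - a)"
proof (cases "L = 0")
  case True
  then have "b = a" using assms by simp
  then show ?thesis unfolding cmp_pt_def by simp
next
  case False
  then show ?thesis unfolding cmp_pt_def by simp
qed

lemma cat0_side:
  fixes x y z :: "'a::metric_space"
  assumes cat: "CAT0_space TYPE('a)" and gc: "geodesic_segment c x y" and gd: "geodesic_segment d x z"
    and l: "0 \<le> l" "l \<le> 1"
  shows "dist (c (l * dist x y)) (d (l * dist x z)) \<le> l * dist y z"
proof -
  have gs: "geodesic_space TYPE('a)" using cat unfolding CAT0_space_def by blast
  obtain e where ge: "geodesic_segment e y z" using gs unfolding geodesic_space_def by blast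
  define c3 where "c3 t = d (dist x z - t)" for t
  have g3: "geodesic_segment c3 z x" unfolding c3_def by (rule geo_rev[OF gd])
  obtain x' y' z' :: complex where cm: "dist x' y' = dist x y" "dist y' z' = dist y z" "dist z' x' = dist z x"
    using cmp_tri[of "dist x y" "dist y z" "dist z x"]
    by (metis dist_commute dist_triangle zero_le_dist add.commute)
  define S where "S = {(c, x', y', dist x y), (e, y', z', dist y z), (c3, z', x', dist z x)}"
  have key: "\<forall>(c, a, b, L)\<in>S. \<forall>(c', a2, b2, L2)\<in>S. \<forall>s\<in>{0..L}. \<forall>t\<in>{0..L2}.
          dist (c s) (c' t) \<le> dist (cmp_pt a b L s) (cmp_pt a2 b2 L2 t)"
  proof -
    have all: "\<forall>(x::'a) y z c1 c2 c3 x' y' z'.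
       geodesic_segment c1 x y \<and> geodesic_segment c2 y z \<and> geodesic_segment c3 z x \<and>
       dist x' y' = dist x y \<and> dist y' z' = dist y z \<and> dist z' x' = dist z x \<longrightarrow>
       (let S = {(c1, x', y', dist x y), (c2, y', z', dist y z), (c3, z', x', dist z x)} in
        \<forall>(c, a, b, L)\<in>S. \<forall>(c', a2, b2, L2)\<in>S. \<forall>s\<in>{0..L}. \<forall>t\<in>{0..L2}.
          dist (c s) (c' t) \<le> dist (cmp_pt a b L s) (cmp_pt a2 b2 L2 t))"
      using cat unfolding CAT0_space_def by (rule conjunct2)
    have pre: "geodesic_segment c x y \<and> geodesic_segment e y z \<and> geodesic_segment c3 z x \<and>
       dist x' y' = dist x y \<and> dist y' z' = dist y z \<and> dist z' x' = dist z x"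
      using gc ge g3 cm by simp
    show ?thesis using mp[OF spec[OF spec[OF spec[OF spec[OF spec[OF spec[OF spec[OF spec[OF spec[OF all, of x], of y], of z], of c], of e], of c3], of x'], of y'], of z'] pre]
      unfolding S_def Let_def .
  qed
  have m1: "(c, x', y', dist x y) \<in> S" and m3: "(c3, z', x', dist z x) \<in> S" unfolding S_def by auto
  have k1: "\<forall>(c', a2, b2, L2)\<in>S. \<forall>s\<in>{0..dist x y}. \<forall>t\<in>{0..L2}.
          dist (c s) (c' t) \<le> dist (cmp_pt x' y' (dist x y) s) (cmp_pt a2 b2 L2 t)"
    using bspec[OF key m1] by simp
  have k2: "\<forall>s\<in>{0..dist x y}. \<forall>t\<in>{0..dist z x}.
          dist (c s) (c3 t) \<le> dist (cmp_pt x' y' (dist x y) s) (cmp_pt z' x' (dist z x) t)"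
    using bspec[OF k1 m3] by simp
  have s: "l * dist x y \<in> {0..dist x y}" using l by (simp add: mult_left_le_one_le)
  have t: "(1 - l) * dist z x \<in> {0..dist z x}" using l by (simp add: mult_left_le_one_le)
  have "dist (c (l * dist x y)) (c3 ((1 - l) * dist z x))
      \<le> dist (cmp_pt x' y' (dist x y) (l * dist x y)) (cmp_pt z' x' (dist z x) ((1 - l) * dist z x))"
    using k2 s t by blast
  moreover have "c3 ((1 - l) * dist z x) = d (l * dist x z)"
    unfolding c3_def by (simp add: dist_commute algebra_simps)
  moreover have "cmp_pt x' y' (dist x y) (l * dist x y) = x' + complex_of_real l * (y' - x')"
    using cmp_pt_frac[OF cm(1) l(1)] .
  moreover have "cmp_pt z' x' (dist z x) ((1 - l) * dist z x) = x' + complex_of_real l * (z' - x')"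
  proof -
    have "cmp_pt z' x' (dist z x) ((1 - l) * dist z x) = z' + complex_of_real (1 - l) * (x' - z')"
      using cmp_pt_frac[OF cm(3)] l by simp
    also have "\<dots> = x' + complex_of_real l * (z' - x')" by (simp add: algebra_simps)
    finally show ?thesis .
  qed
  moreover have "dist (x' + complex_of_real l * (y' - x')) (x' + complex_of_real l * (z' - x')) = l * dist y z"
  proof -
    have "dist (x' + complex_of_real l * (y' - x')) (x' + complex_of_real l * (z' - x'))
        = cmod (complex_of_real l * (y' - z'))" by (simp add: dist_norm algebra_simps)
    also have "\<dots> = l * dist y' z'" using l by (simp add: norm_mult dist_norm)
    finally show ?thesis using cm(2) by simp
  qed
  ultimately show ?thesis by simp
qed

lemma cat0_convex:
  fixes x y x' y' :: "'a::metric_space"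
  assumes cat: "CAT0_space TYPE('a)" and gc: "geodesic_segment c x y" and gc': "geodesic_segment c' x' y'"
    and len: "dist x' y' = dist x y" and l: "0 \<le> l" "l \<le> 1"
  shows "dist (c (l * dist x y)) (c' (l * dist x y)) \<le> (1 - l) * dist x x' + l * dist y y'"
proof -
  have gs: "geodesic_space TYPE('a)" using cat unfolding CAT0_space_def by blast
  obtain d where gd: "geodesic_segment d x y'" using gs unfolding geodesic_space_def by blast
  have A: "dist (c (l * dist x y)) (d (l * dist x y')) \<le> l * dist y y'"
    by (rule cat0_side[OF cat gc gd l])
  have B: "dist ((\<lambda>t. d (dist x y' - t)) ((1 - l) * dist y' x)) ((\<lambda>t. c' (dist x' y' - t)) ((1 - l) * dist y' x'))
      \<le> (1 - l) * dist x x'"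
    using cat0_side[OF cat geo_rev[OF gd] geo_rev[OF gc'], of "1 - l"] l by simp
  have e1: "(\<lambda>t. d (dist x y' - t)) ((1 - l) * dist y' x) = d (l * dist x y')"
    by (simp add: dist_commute algebra_simps)
  have e2: "(\<lambda>t. c' (dist x' y' - t)) ((1 - l) * dist y' x') = c' (l * dist x y)"
    using len by (simp add: dist_commute algebra_simps)
  have B': "dist (d (l * dist x y')) (c' (l * dist x y)) \<le> (1 - l) * dist x x'"
    using B unfolding e1 e2 .
  show ?thesis using A B' dist_triangle[of "c (l * dist x y)" "c' (l * dist x y)" "d (l * dist x y')"]
    by (simp add: dist_commute)
qed


lemma limit_seq:
  fixes \<sigma> :: "nat \<Rightarrow> real \<Rightarrow> 'a::metric_space"
  assumes ps: "proper_space TYPE('a)"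
    and lip: "\<And>n s t. dist (\<sigma> n s) (\<sigma> n t) \<le> \<bar>s - t\<bar>"
    and base: "\<And>n. \<sigma> n 0 = x0"
  shows "\<exists>k. strict_mono k \<and> (\<forall>t. \<exists>l. (\<lambda>n. \<sigma> (k n) t) \<longlonglongrightarrow> l)"
proof -
  define q where "q = from_nat_into (\<rat> :: real set)"
  have rq: "range q = \<rat>" unfolding q_def
  proof (rule range_from_nat_into)
    show "(\<rat> :: real set) \<noteq> {}" using Rats_0 by blast
  qed (rule countable_rat)
  have inc: "\<sigma> n t \<in> cball x0 \<bar>t\<bar>" for n t
    using lip[of n 0 t] base[of n] by simp
  have seqc: "seq_compact (cball x0 r)" for r :: real
    using ps unfolding proper_space_def by (simp add: compact_imp_seq_compact)
  define P where "P i s = (\<exists>l. (\<lambda>n. \<sigma> (s n) (q i)) \<longlonglongrightarrow> l)" for i and s :: "nat \<Rightarrow> nat"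
  interpret subseqs P
  proof
    fix i and s :: "nat \<Rightarrow> nat" assume "strict_mono s"
    have bnd: "\<And>n. \<sigma> (s n) (q i) \<in> cball x0 \<bar>q i\<bar>" using inc by blast
    have "\<exists>l\<in>cball x0 \<bar>q i\<bar>. \<exists>r. strict_mono r \<and> ((\<lambda>n. \<sigma> (s n) (q i)) \<circ> r) \<longlonglongrightarrow> l"
      by (rule mp[OF spec[OF seqc[of "\<bar>q i\<bar>", unfolded seq_compact_def], of "\<lambda>n. \<sigma> (s n) (q i)"]]) (use bnd in blast)
    then obtain l r where "strict_mono r" "((\<lambda>n. \<sigma> (s n) (q i)) \<circ> r) \<longlonglongrightarrow> l"
      by blast
    then show "\<exists>r'. strict_mono r' \<and> P i (s \<circ> r')" unfolding P_def by (auto simp: o_def)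
  qed
  have stable: "P n (s \<circ> r)" if sm: "strict_mono r" and pn: "P n s" for r s n
  proof -
    obtain l where "(\<lambda>m. \<sigma> (s m) (q n)) \<longlonglongrightarrow> l" using pn unfolding P_def by blast
    from LIMSEQ_subseq_LIMSEQ[OF this sm] show ?thesis unfolding P_def by (auto simp: o_def)
  qed
  have conv_q: "\<exists>l. (\<lambda>n. \<sigma> (diagseq n) (q i)) \<longlonglongrightarrow> l" for i
  proof -
    have "P i (diagseq \<circ> ((+) (Suc i)))" by (rule diagseq_holds) (rule stable)
    then obtain l where "(\<lambda>n. \<sigma> (diagseq (Suc i + n)) (q i)) \<longlonglongrightarrow> l" unfolding P_def by (auto simp: o_def)
    hence "(\<lambda>n. \<sigma> (diagseq (n + Suc i)) (q i)) \<longlonglongrightarrow> l" by (simp add: add.commute)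
    hence "(\<lambda>n. \<sigma> (diagseq n) (q i)) \<longlonglongrightarrow> l" by (rule LIMSEQ_offset)
    thus ?thesis by blast
  qed
  have conv: "\<exists>l. (\<lambda>n. \<sigma> (diagseq n) t) \<longlonglongrightarrow> l" for t
  proof -
    have cau: "Cauchy (\<lambda>n. \<sigma> (diagseq n) t)"
    proof (rule metric_CauchyI)
      fix e :: real assume e: "e > 0"
      obtain r where r: "r \<in> \<rat>" "t < r" "r < t + e / 3" using Rats_dense_in_real[of t "t + e/3"] e by auto
      then obtain i where i: "q i = r" using rq by (metis rangeE)
      obtain l where "(\<lambda>n. \<sigma> (diagseq n) (q i)) \<longlonglongrightarrow> l" using conv_q by blast
      hence "Cauchy (\<lambda>n. \<sigma> (diagseq n) (q i))" by (rule LIMSEQ_imp_Cauchy)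
      then obtain M where M: "\<forall>m\<ge>M. \<forall>n\<ge>M. dist (\<sigma> (diagseq m) (q i)) (\<sigma> (diagseq n) (q i)) < e / 3"
        using metric_CauchyD[OF \<open>Cauchy (\<lambda>n. \<sigma> (diagseq n) (q i))\<close>, of "e/3"] e by auto
      show "\<exists>M. \<forall>m\<ge>M. \<forall>n\<ge>M. dist (\<sigma> (diagseq m) t) (\<sigma> (diagseq n) t) < e"
      proof (intro exI allI impI)
        fix m n assume mn: "M \<le> m" "M \<le> n"
        have d1: "dist (\<sigma> (diagseq m) t) (\<sigma> (diagseq m) (q i)) < e / 3"
          using lip[of "diagseq m" t "q i"] r i by simp
        have d2: "dist (\<sigma> (diagseq n) (q i)) (\<sigma> (diagseq n) t) < e / 3"
          using lip[of "diagseq n" "q i" t] r i by simp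
        have d3: "dist (\<sigma> (diagseq m) (q i)) (\<sigma> (diagseq n) (q i)) < e / 3" using M mn by blast
        have "dist (\<sigma> (diagseq m) t) (\<sigma> (diagseq n) t)
            \<le> dist (\<sigma> (diagseq m) t) (\<sigma> (diagseq m) (q i)) + dist (\<sigma> (diagseq m) (q i)) (\<sigma> (diagseq n) t)"
          by (rule dist_triangle)
        also have "\<dots> \<le> dist (\<sigma> (diagseq m) t) (\<sigma> (diagseq m) (q i)) +
            (dist (\<sigma> (diagseq m) (q i)) (\<sigma> (diagseq n) (q i)) + dist (\<sigma> (diagseq n) (q i)) (\<sigma> (diagseq n) t))"
          using dist_triangle by (simp add: add_left_mono)
        finally show "dist (\<sigma> (diagseq m) t) (\<sigma> (diagseq n) t) < e" using d1 d2 d3 by linarith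
      qed
    qed
    have "complete (cball x0 \<bar>t\<bar>)"
      using ps unfolding proper_space_def by (simp add: compact_imp_complete)
    then have "\<exists>l\<in>cball x0 \<bar>t\<bar>. (\<lambda>n. \<sigma> (diagseq n) t) \<longlonglongrightarrow> l"
      unfolding complete_def by (rule mp[OF spec[of _ "\<lambda>n. \<sigma> (diagseq n) t"]]) (use cau inc in blast)
    then show ?thesis by blast
  qed
  show ?thesis using subseq_diagseq conv by blast
qed


lemma dir2:
  fixes G (structure) and \<phi> :: "'g \<Rightarrow> 'a::metric_space \<Rightarrow> 'a"
  assumes grp: "group G" and cat: "CAT0_space TYPE('a)" and ps: "proper_space TYPE('a)"
    and geo: "geometric_action G \<phi>" and gc: "g \<in> carrier G"
    and inf: "infinite (centralizer_of G g)"
  shows "boundary_fixed_set (\<phi> g) \<noteq> {}"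
proof -
  interpret group G by fact
  have ga: "group_action G UNIV \<phi>" and iso: "\<And>f x y. f \<in> carrier G \<Longrightarrow> dist (\<phi> f x) (\<phi> f y) = dist x y"
    and pa: "proper_action G \<phi>"
    using geo unfolding geometric_action_def isometric_action_def by auto
  have gs: "geodesic_space TYPE('a)" using cat unfolding CAT0_space_def by blast
  define x0 :: 'a where "x0 = undefined"
  define C where "C = dist x0 (\<phi> g x0)"
  have "\<forall>n::nat. \<exists>z. z \<in> centralizer_of G g \<and> dist (\<phi> z x0) x0 > real n"
  proof
    fix n :: nat
    show "\<exists>z. z \<in> centralizer_of G g \<and> dist (\<phi> z x0) x0 > real n"
    proof (rule ccontr)
      assume neg: "\<not> ?thesis"
      have "centralizer_of G g \<subseteq> {h \<in> carrier G. dist (\<phi> h x0) x0 \<le> real n}"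
      proof
        fix v assume v: "v \<in> centralizer_of G g"
        hence "\<not> dist (\<phi> v x0) x0 > real n" using neg by blast
        thus "v \<in> {h \<in> carrier G. dist (\<phi> h x0) x0 \<le> real n}" using v unfolding centralizer_of_def by simp
      qed
      thus False using inf finite_displace[OF grp ga pa ps, of x0 "real n"] finite_subset by blast
    qed
  qed
  from choice[OF this] obtain z where z: "\<And>n. z n \<in> centralizer_of G g" "\<And>n. dist (\<phi> (z n) x0) x0 > real n"
    by blast
  define p where "p n = \<phi> (z n) x0" for n
  have zc: "z n \<in> carrier G" "g \<otimes> z n = z n \<otimes> g" for n using z(1)[of n] unfolding centralizer_of_def by auto
  have pC: "dist (p n) (\<phi> g (p n)) = C" for n
  proof -
    have "\<phi> g (p n) = \<phi> (z n) (\<phi> g x0)"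
      unfolding p_def using act_comp[OF ga gc zc(1)[of n]] act_comp[OF ga zc(1)[of n] gc] zc(2)[of n] by simp
    thus ?thesis unfolding p_def C_def using iso[OF zc(1)[of n]] by simp
  qed
  define L where "L n = dist x0 (p n)" for n
  have Ln: "L n > real n" for n unfolding L_def p_def using z(2)[of n] by (simp add: dist_commute)
  have "\<forall>n. \<exists>c. geodesic_segment c x0 (p n)" using gs unfolding geodesic_space_def by blast
  from choice[OF this] obtain c where c: "\<And>n. geodesic_segment (c n) x0 (p n)" by blast
  have cC: "dist (c n t) (\<phi> g (c n t)) \<le> C" if t: "0 \<le> t" "t \<le> L n" for n t
  proof -
    have Lpos: "L n > 0" using Ln[of n] by linarith
    define l where "l = t / L n"
    have l: "0 \<le> l" "l \<le> 1" unfolding l_def using t Lpos by auto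
    have lL: "l * dist x0 (p n) = t" unfolding l_def L_def using Lpos L_def by simp
    have g2: "geodesic_segment (\<phi> g \<circ> c n) (\<phi> g x0) (\<phi> g (p n))"
      by (rule geo_isom[OF c[of n]]) (rule iso[OF gc])
    have "dist (c n (l * dist x0 (p n))) ((\<phi> g \<circ> c n) (l * dist x0 (p n)))
        \<le> (1 - l) * dist x0 (\<phi> g x0) + l * dist (p n) (\<phi> g (p n))"
      by (rule cat0_convex[OF cat c[of n] g2 iso[OF gc] l])
    also have "\<dots> = C" using pC[of n] unfolding C_def by (simp add: algebra_simps)
    finally show ?thesis unfolding lL by simp
  qed
  define \<sigma> where "\<sigma> n t = c n (max 0 (min t (L n)))" for n t
  have clamp: "0 \<le> max 0 (min t (L n)) \<and> max 0 (min t (L n)) \<le> L n" for n t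
    using Ln[of n] by auto
  have ciso: "dist (c n a) (c n b) = \<bar>a - b\<bar>" if "a \<in> {0..L n}" "b \<in> {0..L n}" for n a b
  proof -
    have "\<forall>s\<in>{0..dist x0 (p n)}. \<forall>t\<in>{0..dist x0 (p n)}. dist (c n s) (c n t) = \<bar>s - t\<bar>"
      using c[of n] unfolding geodesic_segment_def by (elim conjE)
    thus ?thesis using that unfolding L_def by blast
  qed
  have lip: "dist (\<sigma> n s) (\<sigma> n t) \<le> \<bar>s - t\<bar>" for n s t
  proof -
    have "dist (\<sigma> n s) (\<sigma> n t) = \<bar>max 0 (min s (L n)) - max 0 (min t (L n))\<bar>"
      unfolding \<sigma>_def by (rule ciso) (use clamp[of s n] clamp[of t n] in simp_all)
    also have "\<dots> \<le> \<bar>s - t\<bar>" by (simp add: abs_le_iff max_def min_def) linarith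
    finally show ?thesis .
  qed
  have base: "\<sigma> n 0 = x0" for n
    using c[of n] Ln[of n] unfolding \<sigma>_def geodesic_segment_def by simp
  have sC: "dist (\<sigma> n t) (\<phi> g (\<sigma> n t)) \<le> C" for n t
    unfolding \<sigma>_def using cC clamp by blast
  have sg: "\<sigma> n t = c n t" if "0 \<le> t" "t \<le> real n" for n t
    using that Ln[of n] unfolding \<sigma>_def by simp
  obtain k where k: "strict_mono k" "\<And>t. \<exists>l. (\<lambda>n. \<sigma> (k n) t) \<longlonglongrightarrow> l"
    using limit_seq[where \<sigma>=\<sigma>, OF ps lip base] by blast
  define \<rho> where "\<rho> t = (SOME l. (\<lambda>n. \<sigma> (k n) t) \<longlonglongrightarrow> l)" for t
  have conv: "(\<lambda>n. \<sigma> (k n) t) \<longlonglongrightarrow> \<rho> t" for t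
    unfolding \<rho>_def by (rule someI_ex[OF k(2)])
  have gcont: "(\<lambda>n. \<phi> g (\<sigma> (k n) t)) \<longlonglongrightarrow> \<phi> g (\<rho> t)" for t
  proof -
    have "(\<lambda>n. dist (\<sigma> (k n) t) (\<rho> t)) \<longlonglongrightarrow> 0" by (rule tendsto_dist_iff[THEN iffD1, OF conv[of t]])
    hence "(\<lambda>n. dist (\<phi> g (\<sigma> (k n) t)) (\<phi> g (\<rho> t))) \<longlonglongrightarrow> 0" by (simp only: iso[OF gc])
    thus ?thesis by (rule tendsto_dist_iff[THEN iffD2])
  qed
  have ray: "geodesic_ray \<rho>"
    unfolding geodesic_ray_def
  proof (intro allI impI)
    fix s t :: real assume st: "0 \<le> s" "0 \<le> t"
    have lim1: "(\<lambda>n. dist (\<sigma> (k n) s) (\<sigma> (k n) t)) \<longlonglongrightarrow> dist (\<rho> s) (\<rho> t)"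
      by (intro tendsto_dist conv)
    obtain N :: nat where N: "max s t \<le> real N" using real_arch_simple by blast
    have "\<forall>n\<ge>N. dist (\<sigma> (k n) s) (\<sigma> (k n) t) = \<bar>s - t\<bar>"
    proof (intro allI impI)
      fix n assume "N \<le> n"
      hence kn: "max s t \<le> real (k n)" using N seq_suble[OF k(1), of n] by (meson of_nat_le_iff order_trans)
      have "\<sigma> (k n) s = c (k n) s" "\<sigma> (k n) t = c (k n) t" using sg kn st by auto
      moreover have "s \<le> dist x0 (p (k n))" "t \<le> dist x0 (p (k n))"
        using kn Ln[of "k n"] unfolding L_def by auto
      ultimately show "dist (\<sigma> (k n) s) (\<sigma> (k n) t) = \<bar>s - t\<bar>"
        using ciso[of s "k n" t] st unfolding L_def by simp
    qed
    hence "(\<lambda>n. dist (\<sigma> (k n) s) (\<sigma> (k n) t)) \<longlonglongrightarrow> \<bar>s - t\<bar>"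
      by (intro tendsto_eventually) (auto simp: eventually_sequentially)
    with lim1 show "dist (\<rho> s) (\<rho> t) = \<bar>s - t\<bar>" by (rule LIMSEQ_unique)
  qed
  have rC: "dist (\<rho> t) (\<phi> g (\<rho> t)) \<le> C" for t
  proof -
    have "(\<lambda>n. dist (\<sigma> (k n) t) (\<phi> g (\<sigma> (k n) t))) \<longlonglongrightarrow> dist (\<rho> t) (\<phi> g (\<rho> t))"
      by (intro tendsto_dist conv gcont)
    thus ?thesis using sC by (intro LIMSEQ_le_const2) auto
  qed
  have rayiso: "geodesic_ray (\<phi> f \<circ> \<eta>)" if "geodesic_ray \<eta>" "f \<in> carrier G" for f \<eta>
    using that iso unfolding geodesic_ray_def by simp
  define \<alpha> where "\<alpha> = {\<eta>. geodesic_ray \<eta> \<and> asymptotic \<rho> \<eta>}"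
  have \<alpha>vb: "\<alpha> \<in> visual_boundary TYPE('a)" unfolding visual_boundary_def \<alpha>_def using ray by blast
  have "bd_act (\<phi> g) \<alpha> = \<alpha>"
  proof
    show "bd_act (\<phi> g) \<alpha> \<subseteq> \<alpha>"
    proof
      fix \<eta>' assume "\<eta>' \<in> bd_act (\<phi> g) \<alpha>"
      then obtain \<eta> where \<eta>: "\<eta> \<in> \<alpha>" "\<eta>' = \<phi> g \<circ> \<eta>" unfolding bd_act_def by blast
      obtain C' where C': "\<And>t. t \<ge> 0 \<Longrightarrow> dist (\<rho> t) (\<eta> t) \<le> C'" using \<eta>(1) unfolding \<alpha>_def asymptotic_def by auto
      have "dist (\<rho> t) (\<phi> g (\<eta> t)) \<le> C + C'" if "t \<ge> 0" for t
      proof -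
        have "dist (\<rho> t) (\<phi> g (\<eta> t)) \<le> dist (\<rho> t) (\<phi> g (\<rho> t)) + dist (\<phi> g (\<rho> t)) (\<phi> g (\<eta> t))"
          by (rule dist_triangle)
        thus ?thesis using rC[of t] C'[OF that] iso[OF gc, of "\<rho> t" "\<eta> t"] by simp
      qed
      hence "asymptotic \<rho> \<eta>'" unfolding asymptotic_def \<eta>(2) by auto
      moreover have "geodesic_ray \<eta>'" using rayiso[OF _ gc] \<eta> unfolding \<alpha>_def by auto
      ultimately show "\<eta>' \<in> \<alpha>" unfolding \<alpha>_def by blast
    qed
  next
    show "\<alpha> \<subseteq> bd_act (\<phi> g) \<alpha>"
    proof
      fix \<eta> assume \<eta>: "\<eta> \<in> \<alpha>"
      have ic: "inv g \<in> carrier G" using gc by simp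
      define \<eta>' where "\<eta>' = \<phi> (inv g) \<circ> \<eta>"
      have eq: "\<eta> = \<phi> g \<circ> \<eta>'" unfolding \<eta>'_def using act_inv(2)[OF grp ga gc] by (auto simp: fun_eq_iff)
      obtain C' where C': "\<And>t. t \<ge> 0 \<Longrightarrow> dist (\<rho> t) (\<eta> t) \<le> C'" using \<eta> unfolding \<alpha>_def asymptotic_def by auto
      have "dist (\<rho> t) (\<eta>' t) \<le> C + C'" if "t \<ge> 0" for t
      proof -
        have "dist (\<rho> t) (\<eta>' t) = dist (\<phi> g (\<rho> t)) (\<eta> t)"
          using iso[OF gc, of "\<rho> t" "\<eta>' t"] eq by (simp add: fun_eq_iff)
        also have "\<dots> \<le> dist (\<phi> g (\<rho> t)) (\<rho> t) + dist (\<rho> t) (\<eta> t)" by (rule dist_triangle)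
        finally show ?thesis using rC[of t] C'[OF that] by (simp add: dist_commute)
      qed
      hence "asymptotic \<rho> \<eta>'" unfolding asymptotic_def by auto
      moreover have "geodesic_ray \<eta>'" unfolding \<eta>'_def using rayiso[OF _ ic] \<eta> unfolding \<alpha>_def by auto
      ultimately have "\<eta>' \<in> \<alpha>" unfolding \<alpha>_def by blast
      thus "\<eta> \<in> bd_act (\<phi> g) \<alpha>" unfolding bd_act_def using eq by blast
    qed
  qed
  thus ?thesis using \<alpha>vb unfolding boundary_fixed_set_def by blast
qed


theorem corollary1:
  fixes G :: "('g, 'b) monoid_scheme" and \<phi> :: "'g \<Rightarrow> 'a::metric_space \<Rightarrow> 'a" and g :: 'g
  assumes "group G"
    and "CAT0_space TYPE('a)" and "proper_space TYPE('a)"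
    and "geometric_action G \<phi>"
    and "g \<in> carrier G"
  shows "boundary_fixed_set (\<phi> g) \<noteq> {} \<longleftrightarrow> infinite (centralizer_of G g)"
  using dir1[OF assms(1,3,4,5)] dir2[OF assms(1,2,3,4,5)] by blast

end
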